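(* Under the hypotheses of the setting below (with $\mu_+(\infty)\le1$, $\mu_-(\infty)<\infty$, (A1), (A4), (A5), (A6)), let $0<\mu_0\le\mu_1$ be constants with $\mu_0\le f'\le\mu_1$ and $\mu_0\rho\le f(\rho)\le\mu_1\rho$ on $[0,\infty)$, and $\eta_0=\min\{\mu_0/\mu_1,q_0^{-1}(\mu_1/\mu_0)\}$, $\eta_1=\max\{\mu_1/\mu_0,q_1^{-1}(\mu_0/\mu_1)\}$. If $r$ is a regular equilibrium solution with $r(1)=\lambda>0$, then $$\lambda\rho^{c_1}\le r(\rho)\le\lambda\rho^{c_0}\qquad\text{for all }\rho\in(0,1],$$ where $c_0=\eta_0\mu_0/\mu_1$ and $c_1=\eta_1\mu_1/\mu_0$.
   Context: Setting: $n\ge2$; $\kappa$ continuous on $[0,\infty)$, $\kappa_\pm=\max\{\pm\kappa,0\}$, $\mu_\pm(\infty)=\int_0^\infty s\kappa_\pm(s)ds$; $f$ solves $f''+\kappa f=0$, $f(0)=0$, $f'(0)=1$. $\Phi(v_1,\dots,v_n)=\sum_i\phi(v_i)+h(v_1\cdots v_n)$, $\tau(\rho)=f(r(\rho))/f(\rho)$. An equilibrium solution with $r(1)=\lambda$ is $r\in C^1(0,1]$, twice differentiable on $(0,1)$, $r'>0$ on $(0,1]$, $r(0):=\lim_{\rho\to0^+}r(\rho)\ge0$, $r(1)=\lambda$, satisfying on $(0,1)$ $$f(\rho)\big[\phi''(r')+h''(r'\tau^{n-1})\tau^{2(n-1)}\big]r''=(n-1)\big[f'(r)\phi'(\tau)-f'(\rho)\phi'(r')\big]-(n-1)\big(f'(r)r'-f'(\rho)\tau\big)h''(r'\tau^{n-1})\,r'\tau^{2n-3};$$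 regular means $r(0)=0$. (A1) $h$ is $C^2$ and strictly convex. (A4) $\phi:(0,\infty)\to(0,\infty)$ is $C^2$ and convex. (A5) $v\phi'(v)$ is increasing. (A6) there is $t_0\ge0$ with $\phi'(t_0)=0$; $q_1(s)=\sup_{v>t_0}\phi'(v)/\phi'(sv)$ ($s\ge1$), $q_0(s)=\inf_{v>t_0/s}\phi'(v)/\phi'(sv)$ ($s\in(0,1]$) satisfy $q_1\in C^1[1,\infty)$, $q_0\in C^1(0,1]$, $q_1(s)\to0$ as $s\to\infty$, $q_0(s)\to\infty$ as $s\to0^+$, $q_1'<0$, $q_0'<0$. *)

theory Defs
  imports "HOL-Analysis.Analysis"
begin

definition strict_convex_on :: "real set \<Rightarrow> (real \<Rightarrow> real) \<Rightarrow> bool" where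
  "strict_convex_on S g \<longleftrightarrow> convex S \<and>
     (\<forall>x\<in>S. \<forall>y\<in>S. x \<noteq> y \<longrightarrow> (\<forall>t. 0 < t \<and> t < 1 \<longrightarrow>
        g ((1 - t) * x + t * y) < (1 - t) * g x + t * g y))"

definition q1_fun :: "(real \<Rightarrow> real) \<Rightarrow> real \<Rightarrow> real \<Rightarrow> real" where
  "q1_fun dphi t0 s = (SUP v\<in>{t0<..}. dphi v / dphi (s * v))"

definition q0_fun :: "(real \<Rightarrow> real) \<Rightarrow> real \<Rightarrow> real \<Rightarrow> real" where
  "q0_fun dphi t0 s = (INF v\<in>{t0 / s<..}. dphi v / dphi (s * v))"

definition tau_fun :: "(real \<Rightarrow> real) \<Rightarrow> (real \<Rightarrow> real) \<Rightarrow> real \<Rightarrow> real" where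
  "tau_fun f r \<rho> = f (r \<rho>) / f \<rho>"

text \<open>Equilibrium solution with r(1) = lam. Here df = f', dphi = phi', ddphi = phi'',
  ddh = h''; rd and rdd are the first and second derivatives of r.\<close>
definition equilibrium_solution ::
  "nat \<Rightarrow> (real \<Rightarrow> real) \<Rightarrow> (real \<Rightarrow> real) \<Rightarrow> (real \<Rightarrow> real) \<Rightarrow> (real \<Rightarrow> real)
   \<Rightarrow> (real \<Rightarrow> real) \<Rightarrow> real \<Rightarrow> (real \<Rightarrow> real) \<Rightarrow> bool" where
  "equilibrium_solution n f df dphi ddphi ddh lam r \<longleftrightarrow>
     (\<exists>rd rdd r0.
        (\<forall>\<rho>\<in>{0<..1}. (r has_real_derivative rd \<rho>) (at \<rho> within {0<..1})) \<and>
        continuous_on {0<..1} rd \<and>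
        (\<forall>\<rho>\<in>{0<..<1}. (rd has_real_derivative rdd \<rho>) (at \<rho>)) \<and>
        (\<forall>\<rho>\<in>{0<..1}. rd \<rho> > 0) \<and>
        (r \<longlongrightarrow> r0) (at_right 0) \<and> r0 \<ge> 0 \<and>
        r 1 = lam \<and>
        (\<forall>\<rho>\<in>{0<..<1}.
           let \<tau> = tau_fun f r \<rho> in
           f \<rho> * (ddphi (rd \<rho>) + ddh (rd \<rho> * \<tau> ^ (n - 1)) * \<tau> ^ (2 * (n - 1))) * rdd \<rho>
           = real (n - 1) * (df (r \<rho>) * dphi \<tau> - df \<rho> * dphi (rd \<rho>))
             - real (n - 1) * (df (r \<rho>) * rd \<rho> - df \<rho> * \<tau>)
               * ddh (rd \<rho> * \<tau> ^ (n - 1)) * rd \<rho> * \<tau> ^ (2 * n - 3)))"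

definition regular_equilibrium_solution ::
  "nat \<Rightarrow> (real \<Rightarrow> real) \<Rightarrow> (real \<Rightarrow> real) \<Rightarrow> (real \<Rightarrow> real) \<Rightarrow> (real \<Rightarrow> real)
   \<Rightarrow> (real \<Rightarrow> real) \<Rightarrow> real \<Rightarrow> (real \<Rightarrow> real) \<Rightarrow> bool" where
  "regular_equilibrium_solution n f df dphi ddphi ddh lam r \<longleftrightarrow>
     equilibrium_solution n f df dphi ddphi ddh lam r \<and> (r \<longlongrightarrow> 0) (at_right 0)"

end

theory Submission
  imports Defs
begin

lemma alg: fixes F T D Rd R Xx :: real and m :: nat assumes "F \<noteq> 0"
 shows "F * T^(m+1) * (D * (Rd * (real (m+1) * (Xx / F * T^m)) + R * T^(m+1)))
   = F * D * T^(2*m+2) * R + real (m+1) * Xx * D * Rd * T^(2*m+1)"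
proof -
  have e: "T^(2*m+2) = T^(m+1)*T^(m+1)" "T^(2*m+1) = T^(m+1)*T^m"
    by (simp_all add: power_add[symmetric] mult_2)
  show ?thesis unfolding e using assms by (simp add: field_simps)
qed

locale eqs =
  fixes n :: nat and f df dphi ddphi dh ddh r rd rdd :: "real \<Rightarrow> real"
    and t0 \<mu>0 \<mu>1 lam \<eta>0 \<eta>1 :: real
  assumes n2: "n \<ge> 2"
    and mu0: "0 < \<mu>0" and mu01: "\<mu>0 \<le> \<mu>1"
    and dfb: "\<And>x. 0 \<le> x \<Longrightarrow> \<mu>0 \<le> df x \<and> df x \<le> \<mu>1"
    and fb: "\<And>x. 0 \<le> x \<Longrightarrow> \<mu>0 * x \<le> f x \<and> f x \<le> \<mu>1 * x"
    and fder: "\<And>x. 0 < x \<Longrightarrow> (f has_real_derivative df x) (at x)"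
    and rder: "\<And>x. 0 < x \<Longrightarrow> x < 1 \<Longrightarrow> (r has_real_derivative rd x) (at x)"
    and rcont: "continuous_on {0<..1} r"
    and rdcont: "continuous_on {0<..1} rd"
    and rdder: "\<And>x. 0 < x \<Longrightarrow> x < 1 \<Longrightarrow> (rd has_real_derivative rdd x) (at x)"
    and rdpos: "\<And>x. 0 < x \<Longrightarrow> x \<le> 1 \<Longrightarrow> rd x > 0"
    and rlim: "(r \<longlongrightarrow> 0) (at_right 0)"
    and r1: "r 1 = lam"
    and ode: "\<And>\<rho>. 0 < \<rho> \<Longrightarrow> \<rho> < 1 \<Longrightarrow>
           f \<rho> * (ddphi (rd \<rho>) + ddh (rd \<rho> * tau_fun f r \<rho> ^ (n - 1)) * tau_fun f r \<rho> ^ (2 * (n - 1))) * rdd \<rho>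
           = real (n - 1) * (df (r \<rho>) * dphi (tau_fun f r \<rho>) - df \<rho> * dphi (rd \<rho>))
             - real (n - 1) * (df (r \<rho>) * rd \<rho> - df \<rho> * tau_fun f r \<rho>)
               * ddh (rd \<rho> * tau_fun f r \<rho> ^ (n - 1)) * rd \<rho> * tau_fun f r \<rho> ^ (2 * n - 3)"
    and dphider: "\<And>v. 0 < v \<Longrightarrow> (dphi has_real_derivative ddphi v) (at v)"
    and ddphi_nn: "\<And>v. 0 < v \<Longrightarrow> ddphi v \<ge> 0"
    and dphi_mono: "\<And>p q. 0 < p \<Longrightarrow> p \<le> q \<Longrightarrow> dphi p \<le> dphi q"
    and A5: "\<And>p q. 0 < p \<Longrightarrow> p \<le> q \<Longrightarrow> p * dphi p \<le> q * dphi q"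
    and t0: "t0 \<ge> 0"
    and dphi_pos: "\<And>v. t0 < v \<Longrightarrow> dphi v > 0"
    and dphi_le0: "\<And>v. 0 < v \<Longrightarrow> v \<le> t0 \<Longrightarrow> dphi v \<le> 0"
    and dphi_strict: "\<And>p q. t0 \<le> p \<Longrightarrow> 0 < p \<Longrightarrow> p < q \<Longrightarrow> dphi p < dphi q"
    and dhder: "\<And>x. 0 < x \<Longrightarrow> (dh has_real_derivative ddh x) (at x)"
    and ddh_nn: "\<And>x. 0 < x \<Longrightarrow> ddh x \<ge> 0"
    and dh_strict: "\<And>p q. 0 < p \<Longrightarrow> p < q \<Longrightarrow> dh p < dh q"
    and Q1: "\<And>s v. \<eta>1 < s \<Longrightarrow> t0 < v \<Longrightarrow> dphi v < (\<mu>0 / \<mu>1) * dphi (s * v)"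
    and Q0: "\<And>s v. 0 < s \<Longrightarrow> s < \<eta>0 \<Longrightarrow> t0 / s < v \<Longrightarrow> dphi v > (\<mu>1 / \<mu>0) * dphi (s * v)"
    and eta1: "\<mu>1 / \<mu>0 \<le> \<eta>1" and eta0: "\<eta>0 \<le> \<mu>0 / \<mu>1" and eta0pos: "0 < \<eta>0"
begin

abbreviation "tau \<equiv> tau_fun f r"
definition "X \<rho> = df (r \<rho>) * rd \<rho> - df \<rho> * tau \<rho>"
definition "Y \<rho> = df (r \<rho>) * dphi (tau \<rho>) - df \<rho> * dphi (rd \<rho>)"
definition "g \<rho> = rd \<rho> * tau \<rho> ^ (n - 1)"

lemma pos_mult_le0: fixes c y :: real shows "0 < c \<Longrightarrow> c * y \<le> 0 \<Longrightarrow> y \<le> 0"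
  by (meson mult_pos_pos not_le)

lemma mu1: "0 < \<mu>1" using mu0 mu01 by linarith

lemma fpos: "0 < x \<Longrightarrow> 0 < f x"
  using fb[of x] mu0 by (smt (verit) mult_pos_pos)

lemma fcont: "continuous_on {0<..} f"
  by (rule continuous_at_imp_continuous_on) (auto intro: DERIV_isCont fder)

lemma r_strict: "0 < a \<Longrightarrow> a < b \<Longrightarrow> b \<le> 1 \<Longrightarrow> r a < r b"
  by (rule DERIV_pos_imp_increasing_open[of a b r])
     (auto intro!: rder rdpos continuous_on_subset[OF rcont] exI[of _ "rd _"])

lemma rpos: assumes "0 < x" "x \<le> 1" shows "0 < r x"
proof -
  have "0 \<le> r (x/2)"
  proof (rule tendsto_upperbound[OF rlim])
    show "\<forall>\<^sub>F y in at_right 0. r y \<le> r (x/2)"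
    proof (rule eventually_mono)
      show "\<forall>\<^sub>F y in at_right 0. y \<in> {0<..<x/2}" using assms by (intro eventually_at_right_real) auto
    qed (use assms in \<open>auto intro!: less_imp_le r_strict\<close>)
  qed simp
  also have "\<dots> < r x" using assms by (intro r_strict) auto
  finally show ?thesis .
qed

lemma tau_pos: "0 < x \<Longrightarrow> x \<le> 1 \<Longrightarrow> 0 < tau x"
  by (simp add: tau_fun_def fpos rpos)

lemma tau_lower: assumes "0 < x" "x \<le> 1" shows "\<mu>0 * r x / (\<mu>1 * x) \<le> tau x"
proof -
  have "\<mu>0 * r x / (\<mu>1 * x) \<le> f (r x) / (\<mu>1 * x)"
    using fb[of "r x"] rpos[OF assms] assms mu1 by (intro divide_right_mono) auto
  also have "\<dots> \<le> f (r x) / f x"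
    using fb[of "r x"] fb[of x] rpos[OF assms] assms mu0 fpos[of x] fpos[of "r x"]
    by (intro divide_left_mono) auto
  finally show ?thesis by (simp add: tau_fun_def)
qed

lemma tau_upper: assumes "0 < x" "x \<le> 1" shows "tau x \<le> \<mu>1 * r x / (\<mu>0 * x)"
proof -
  have "f (r x) / f x \<le> f (r x) / (\<mu>0 * x)"
    using fb[of "r x"] fb[of x] rpos[OF assms] assms mu0 fpos[of x] fpos[of "r x"]
    by (intro divide_left_mono) auto
  also have "\<dots> \<le> \<mu>1 * r x / (\<mu>0 * x)"
    using fb[of "r x"] rpos[OF assms] assms mu0 by (intro divide_right_mono) auto
  finally show ?thesis by (simp add: tau_fun_def)
qed

lemma tau_cont: "continuous_on {0<..1} tau"
proof -
  have "continuous_on {0<..1} (\<lambda>x. f (r x))"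
    by (rule continuous_on_compose2[OF fcont rcont]) (auto intro: rpos)
  moreover have "continuous_on {0<..1} f" by (rule continuous_on_subset[OF fcont]) auto
  ultimately show ?thesis unfolding tau_fun_def[abs_def] using fpos
    by (intro continuous_on_divide) force+
qed

lemma tau_der: assumes "0 < x" "x < 1"
  shows "(tau has_real_derivative X x / f x) (at x)"
proof -
  have "((\<lambda>x. f (r x) / f x) has_real_derivative
     (df (r x) * rd x * f x - f (r x) * df x) / (f x * f x)) (at x)"
    using assms fpos[of x] rpos[of x]
    by (intro DERIV_divide DERIV_chain2[OF fder] rder fder) auto
  moreover have "(df (r x) * rd x * f x - f (r x) * df x) / (f x * f x) = X x / f x"
    using fpos[of x] assms by (simp add: X_def tau_fun_def field_simps)
  ultimately show ?thesis unfolding tau_fun_def[abs_def] by simp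
qed

lemma dphicont: "continuous_on {0<..} dphi"
  by (rule continuous_at_imp_continuous_on) (auto intro: DERIV_isCont dphider)

lemma dhcont: "continuous_on {0<..} dh"
  by (rule continuous_at_imp_continuous_on) (auto intro: DERIV_isCont dhder)

lemma gpos: "0 < x \<Longrightarrow> x \<le> 1 \<Longrightarrow> 0 < g x"
  by (simp add: g_def rdpos tau_pos)

lemma gcont: "continuous_on {0<..1} g"
  unfolding g_def[abs_def] by (intro continuous_on_mult continuous_on_power rdcont tau_cont)

lemma g_der: assumes "0 < x" "x < 1"
  shows "(g has_real_derivative rd x * (of_nat (n - 1) * (X x / f x * tau x ^ (n - 1 - Suc 0)))
            + rdd x * tau x ^ (n - 1)) (at x)"
  unfolding g_def[abs_def] using assms
  by (intro DERIV_mult' DERIV_power tau_der rdder)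

lemma Qderiv: "0 < x \<Longrightarrow> x < 1 \<Longrightarrow>
    ((\<lambda>x. dphi (rd x)) has_real_derivative ddphi (rd x) * rdd x) (at x)"
  by (intro DERIV_chain2[OF dphider] rdder rdpos) auto

lemma core:
  assumes sig: "\<sigma> = 1 \<or> \<sigma> = -1" and u: "0 < u" and uv: "u < v" and v: "v \<le> 1"
    and sg: "\<And>x. u < x \<Longrightarrow> x < v \<Longrightarrow> 0 < \<sigma> * X x \<and> \<sigma> * Y x \<le> 0"
  shows "\<sigma> * rd v \<le> \<sigma> * rd u \<and> \<sigma> * tau u < \<sigma> * tau v"
proof -
  obtain m where nm: "n = m + 2" using n2 by (metis add.commute le_Suc_ex)
  have tauinc: "\<sigma> * tau u < \<sigma> * tau v"
  proof (rule DERIV_pos_imp_increasing_open[of u v "\<lambda>x. \<sigma> * tau x"])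
    fix x assume x: "u < x" "x < v"
    have "((\<lambda>x. \<sigma> * tau x) has_real_derivative \<sigma> * (X x / f x)) (at x)"
      using x u v by (intro DERIV_cmult tau_der) auto
    moreover have "0 < \<sigma> * (X x / f x)"
    proof -
      have "\<sigma> * (X x / f x) = (\<sigma> * X x) / f x" by simp
      then show ?thesis using sg[OF x] fpos[of x] x u by (simp del: times_divide_eq_right)
    qed
    ultimately show "\<exists>y. ((\<lambda>x. \<sigma> * tau x) has_real_derivative y) (at x) \<and> 0 < y" by blast
  next
    show "continuous_on {u..v} (\<lambda>x. \<sigma> * tau x)" using u v
      by (intro continuous_on_mult continuous_on_const continuous_on_subset[OF tau_cont]) auto
  qed (rule uv)
  have key: "\<sigma> * (ddphi (rd x) * rdd x) \<le> 0" if x: "u < x" "x < v" for x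
  proof -
    have x01: "0 < x" "x < 1" using x u v by auto
    have tp: "0 < tau x" using x01 by (intro tau_pos) auto
    have gp: "0 < g x" using x01 by (intro gpos) auto
    have odex: "f x * (ddphi (rd x) + ddh (g x) * tau x ^ (2*(n-1))) * rdd x
       = real(n-1) * Y x - real(n-1) * X x * ddh (g x) * rd x * tau x ^ (2*n-3)"
      using ode[OF x01] by (simp add: X_def Y_def g_def)
    have rhs: "\<sigma> * (real(n-1) * Y x - real(n-1) * X x * ddh (g x) * rd x * tau x ^ (2*n-3)) \<le> 0"
    proof -
      have "real(n-1) * (\<sigma> * Y x) \<le> 0" using sg[OF x] by (simp add: mult_nonneg_nonpos)
      moreover have "0 \<le> real(n-1) * (\<sigma> * X x) * ddh (g x) * rd x * tau x ^ (2*n-3)"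
        using sg[OF x] ddh_nn[OF gp] rdpos[of x] x01 tp by simp
      ultimately show ?thesis by (simp add: algebra_simps)
    qed
    show ?thesis
    proof (cases "ddphi (rd x) = 0")
      case True then show ?thesis by simp
    next
      case False
      then have dp: "0 < ddphi (rd x)" using ddphi_nn[of "rd x"] rdpos[of x] x01 by auto
      have Apos: "0 < f x * (ddphi (rd x) + ddh (g x) * tau x ^ (2*(n-1)))"
        using dp ddh_nn[OF gp] tp fpos[of x] x01 by (intro mult_pos_pos) (auto intro: add_pos_nonneg)
      have "f x * (ddphi (rd x) + ddh (g x) * tau x ^ (2*(n-1))) * (\<sigma> * rdd x)
          = \<sigma> * (f x * (ddphi (rd x) + ddh (g x) * tau x ^ (2*(n-1))) * rdd x)"
        by (simp only: mult_ac)
      also have "\<dots> = \<sigma> * (real(n-1) * Y x - real(n-1) * X x * ddh (g x) * rd x * tau x ^ (2*n-3))"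
        by (simp only: odex)
      also have "\<dots> \<le> 0" by (rule rhs)
      finally have "f x * (ddphi (rd x) + ddh (g x) * tau x ^ (2*(n-1))) * (\<sigma> * rdd x) \<le> 0" .
      then have "\<sigma> * rdd x \<le> 0" using Apos by (rule pos_mult_le0[rotated])
      moreover have "\<sigma> * (ddphi (rd x) * rdd x) = ddphi (rd x) * (\<sigma> * rdd x)" by (simp only: mult_ac)
      ultimately show ?thesis using mult_nonneg_nonpos[of "ddphi (rd x)" "\<sigma> * rdd x"] dp by linarith
    qed
  qed
  have Qmono: "\<sigma> * dphi (rd b) \<le> \<sigma> * dphi (rd a)" if ab: "u \<le> a" "a \<le> b" "b \<le> v" for a b
  proof (rule DERIV_nonpos_imp_decreasing_open[of a b "\<lambda>x. \<sigma> * dphi (rd x)"])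
    fix x assume x: "a < x" "x < b"
    have "((\<lambda>x. \<sigma> * dphi (rd x)) has_real_derivative \<sigma> * (ddphi (rd x) * rdd x)) (at x)"
      using x ab u v by (intro DERIV_cmult Qderiv) auto
    then show "\<exists>y. ((\<lambda>x. \<sigma> * dphi (rd x)) has_real_derivative y) (at x) \<and> y \<le> 0"
      using key[of x] x ab by auto
  next
    have "continuous_on {a..b} (\<lambda>x. dphi (rd x))"
      using ab u v by (intro continuous_on_compose2[OF dphicont continuous_on_subset[OF rdcont]])
        (auto intro: rdpos)
    then show "continuous_on {a..b} (\<lambda>x. \<sigma> * dphi (rd x))"
      by (intro continuous_on_mult continuous_on_const)
  qed (rule ab)
  have rdmono: "\<sigma> * rd v \<le> \<sigma> * rd u"
  proof (rule ccontr)
    assume "\<not> ?thesis"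
    then have contra: "\<sigma> * rd u < \<sigma> * rd v" by simp
    define p where "p = min (rd u) (rd v)"
    define q where "q = max (rd u) (rd v)"
    have ru: "0 < rd u" and rv: "0 < rd v" using u uv v rdpos by auto
    have pq: "0 < p" "p < q" using ru rv contra sig by (auto simp: p_def q_def)
    have Quv: "\<sigma> * dphi (rd v) \<le> \<sigma> * dphi (rd u)" using Qmono[of u v] uv by simp
    have eq: "dphi p = dphi q"
      using sig
    proof
      assume s: "\<sigma> = 1"
      then have "rd u < rd v" using contra by simp
      then show ?thesis using Quv s dphi_mono[of "rd u" "rd v"] ru
        by (simp add: p_def q_def min_def max_def)
    next
      assume s: "\<sigma> = -1"
      then have "rd v < rd u" using contra by simp
      then show ?thesis using Quv s dphi_mono[of "rd v" "rd u"] rv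
        by (simp add: p_def q_def min_def max_def)
    qed
    have "\<not> t0 \<le> p" using dphi_strict[of p q] eq pq by auto
    then have le0: "dphi p \<le> 0" using dphi_le0[of p] pq by auto
    have "p * dphi p \<le> q * dphi p" using A5[of p q] eq pq by simp
    then have "0 \<le> (q - p) * dphi p" by (simp add: algebra_simps)
    then have "0 \<le> dphi p" using pq by (simp add: zero_le_mult_iff)
    then have z: "dphi p = 0" "dphi q = 0" using le0 eq by auto
    have zuv: "dphi (rd u) = 0" "dphi (rd v) = 0"
      using z by (auto simp: p_def q_def min_def max_def split: if_splits)
    have Qzero: "dphi (rd w) = 0" if w: "u \<le> w" "w \<le> v" for w
    proof -
      have "\<sigma> * dphi (rd w) \<le> 0" using Qmono[of u w] w zuv by simp
      moreover have "0 \<le> \<sigma> * dphi (rd w)" using Qmono[of w v] w zuv by simp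
      ultimately have "\<sigma> * dphi (rd w) = 0" by simp
      then show ?thesis using sig by auto
    qed
    have keyzero: "ddphi (rd x) * rdd x = 0" if x: "u < x" "x < v" for x
    proof (rule DERIV_local_const[OF Qderiv[of x]])
      show "0 < x" "x < 1" using x u v by auto
      show "0 < min (x - u) (v - x)" using x by simp
      show "\<forall>y. \<bar>x - y\<bar> < min (x - u) (v - x) \<longrightarrow> dphi (rd x) = dphi (rd y)"
        using x by (auto intro!: trans[OF Qzero Qzero[symmetric]])
    qed
    define g' where "g' x = rd x * (of_nat (n - 1) * (X x / f x * tau x ^ (n - 1 - Suc 0)))
            + rdd x * tau x ^ (n - 1)" for x
    have Hkey: "\<sigma> * (ddh (g x) * g' x) \<le> 0" if x: "u < x" "x < v" for x
    proof -
      have x01: "0 < x" "x < 1" using x u v by auto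
      have tp: "0 < tau x" using x01 by (intro tau_pos) auto
      have fp: "0 < f x" using x01 fpos by auto
      have odex: "f x * (ddphi (rd x) + ddh (g x) * tau x ^ (2*(n-1))) * rdd x
         = real(n-1) * Y x - real(n-1) * X x * ddh (g x) * rd x * tau x ^ (2*n-3)"
        using ode[OF x01] by (simp add: X_def Y_def g_def)
      have odex2: "f x * ddh (g x) * tau x ^ (2*(n-1)) * rdd x
         = real(n-1) * Y x - real(n-1) * X x * ddh (g x) * rd x * tau x ^ (2*n-3)"
      proof -
        have e1: "f x * (ddphi (rd x) + ddh (g x) * tau x ^ (2*(n-1))) * rdd x
          = f x * (ddphi (rd x) * rdd x) + f x * ddh (g x) * tau x ^ (2*(n-1)) * rdd x"
          by (simp add: algebra_simps)
        have "f x * ddh (g x) * tau x ^ (2*(n-1)) * rdd x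
          = f x * (ddphi (rd x) + ddh (g x) * tau x ^ (2*(n-1))) * rdd x"
          by (simp only: e1 keyzero[OF x] mult_zero_right add_0_left)
        then show ?thesis by (simp only: odex)
      qed
      have "f x * tau x ^ (n - 1) * (ddh (g x) * g' x) = real (n-1) * Y x"
      proof -
        have "f x * tau x ^ (n - 1) * (ddh (g x) * g' x)
            = f x * ddh (g x) * tau x ^ (2*(n-1)) * rdd x
              + real(n-1) * X x * ddh (g x) * rd x * tau x ^ (2*n-3)"
        proof -
          have nn: "n - 1 = m + 1" "m + 1 - Suc 0 = m" "2 * (m + 1) = 2*m+2" "2 * n - 3 = 2*m+1"
            using nm by auto
          show ?thesis unfolding g'_def nn by (rule alg) (use fp in simp)
        qed
        then show ?thesis using odex2 by simp
      qed
      note eqH = this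
      have "f x * tau x ^ (n - 1) * (\<sigma> * (ddh (g x) * g' x))
          = \<sigma> * (f x * tau x ^ (n - 1) * (ddh (g x) * g' x))" by (simp only: mult_ac)
      also have "\<dots> = \<sigma> * (real (n-1) * Y x)" by (simp only: eqH)
      also have "\<dots> = real (n-1) * (\<sigma> * Y x)" by (simp only: mult_ac)
      also have "\<dots> \<le> 0" using sg[OF x] by (simp add: mult_nonneg_nonpos)
      finally have "f x * tau x ^ (n - 1) * (\<sigma> * (ddh (g x) * g' x)) \<le> 0" .
      moreover have "0 < f x * tau x ^ (n - 1)" using fp tp by simp
      ultimately have "f x * tau x ^ (n - 1) * (\<sigma> * (ddh (g x) * g' x)) \<le> 0" by simp
      then show ?thesis using \<open>0 < f x * tau x ^ (n - 1)\<close> by (rule pos_mult_le0[rotated])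
    qed
    have Hmono: "\<sigma> * dh (g v) \<le> \<sigma> * dh (g u)"
    proof (rule DERIV_nonpos_imp_decreasing_open[of u v "\<lambda>x. \<sigma> * dh (g x)"])
      fix x assume x: "u < x" "x < v"
      have "((\<lambda>x. \<sigma> * dh (g x)) has_real_derivative \<sigma> * (ddh (g x) * g' x)) (at x)"
        unfolding g'_def using x u v
        by (intro DERIV_cmult DERIV_chain2[OF dhder] g_der gpos) auto
      then show "\<exists>y. ((\<lambda>x. \<sigma> * dh (g x)) has_real_derivative y) (at x) \<and> y \<le> 0"
        using Hkey[OF x] by auto
    next
      have "continuous_on {u..v} (\<lambda>x. dh (g x))"
        using u v by (intro continuous_on_compose2[OF dhcont continuous_on_subset[OF gcont]])
          (auto intro: gpos)
      then show "continuous_on {u..v} (\<lambda>x. \<sigma> * dh (g x))"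
        by (intro continuous_on_mult continuous_on_const)
    qed (use uv in simp)
    have tu: "0 < tau u" and tv: "0 < tau v" using u uv v by (auto intro!: tau_pos)
    show False using sig
    proof
      assume s: "\<sigma> = 1"
      then have "dh (g v) \<le> dh (g u)" using Hmono by simp
      then have gvu: "g v \<le> g u" using dh_strict[of "g u" "g v"] gpos[of u] u uv v by force
      have p1: "tau u ^ (n-1) < tau v ^ (n-1)" using tauinc s tu n2 by (intro power_strict_mono) auto
      have p2: "rd u < rd v" using contra s by simp
      have "rd u * tau u ^ (n-1) < rd v * tau v ^ (n-1)"
        using mult_strict_mono[OF p2 p1] rv tu by simp
      then show False using gvu by (simp add: g_def)
    next
      assume s: "\<sigma> = -1"
      then have "dh (g u) \<le> dh (g v)" using Hmono by simp
      then have guv: "g u \<le> g v" using dh_strict[of "g v" "g u"] gpos[of v] u uv v by force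
      have p1: "tau v ^ (n-1) < tau u ^ (n-1)" using tauinc s tv n2 by (intro power_strict_mono) auto
      have p2: "rd v < rd u" using contra s by simp
      have "rd v * tau v ^ (n-1) < rd u * tau u ^ (n-1)"
        using mult_strict_mono[OF p2 p1] ru tv by simp
      then show False using guv by (simp add: g_def)
    qed
  qed
  show ?thesis using rdmono tauinc by simp
qed

lemma signU: assumes x: "0 < x" "x < 1" and big: "\<eta>1 < rd x / tau x"
  shows "0 < X x \<and> Y x \<le> 0"
proof -
  have tp: "0 < tau x" using x by (intro tau_pos) auto
  have dp: "0 < rd x" using x by (intro rdpos) auto
  have rp: "0 < r x" using x by (intro rpos) auto
  have dgt: "\<eta>1 * tau x < rd x" using big tp by (simp add: less_divide_eq)
  have "(\<mu>1/\<mu>0) * tau x \<le> \<eta>1 * tau x" using eta1 tp by (intro mult_right_mono) auto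
  then have d2: "(\<mu>1/\<mu>0) * tau x < rd x" using dgt by linarith
  have "\<mu>0 * ((\<mu>1/\<mu>0) * tau x) < \<mu>0 * rd x" using d2 mu0 by (intro mult_strict_left_mono) auto
  then have d3: "\<mu>1 * tau x < \<mu>0 * rd x" using mu0 by simp
  have "1 \<le> \<mu>1/\<mu>0" using mu0 mu01 by simp
  then have "1 * tau x \<le> (\<mu>1/\<mu>0) * tau x" using tp by (intro mult_right_mono) auto
  then have "tau x \<le> (\<mu>1/\<mu>0) * tau x" by (simp only: mult_1)
  then have dtau: "tau x < rd x" using d2 by linarith
  have dfr: "\<mu>0 \<le> df (r x) \<and> df (r x) \<le> \<mu>1" using dfb[of "r x"] rp by simp
  have dfx: "\<mu>0 \<le> df x \<and> df x \<le> \<mu>1" using dfb[of x] x by simp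
  have "\<mu>0 * rd x \<le> df (r x) * rd x" using dfr dp by (intro mult_right_mono) auto
  moreover have "df x * tau x \<le> \<mu>1 * tau x" using dfx tp by (intro mult_right_mono) auto
  ultimately have Xp: "0 < X x" using d3 by (simp add: X_def)
  have "Y x \<le> 0"
  proof (cases "t0 < tau x")
    case True
    have "rd x / tau x * tau x = rd x" using tp by simp
    then have q: "dphi (tau x) < (\<mu>0/\<mu>1) * dphi (rd x)" using Q1[OF big True] by simp
    have dpt: "0 < dphi (tau x)" using True dphi_pos by auto
    have dpd: "0 < dphi (rd x)" using True dtau dphi_pos by auto
    have "df (r x) * dphi (tau x) \<le> \<mu>1 * dphi (tau x)" using dfr dpt by (intro mult_right_mono) auto
    also have "\<dots> < \<mu>1 * ((\<mu>0/\<mu>1) * dphi (rd x))" using q mu1 by (intro mult_strict_left_mono) auto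
    also have "\<dots> = \<mu>0 * dphi (rd x)" using mu1 by simp
    also have "\<dots> \<le> df x * dphi (rd x)" using dfx dpd by (intro mult_right_mono) auto
    finally show ?thesis by (simp add: Y_def)
  next
    case False
    then have dpt: "dphi (tau x) \<le> 0" using dphi_le0 tp by auto
    have a5: "tau x * dphi (tau x) \<le> rd x * dphi (rd x)" using A5[of "tau x" "rd x"] tp dtau by simp
    have "Y x * rd x = df (r x) * dphi (tau x) * rd x - df x * (rd x * dphi (rd x))"
      by (simp add: Y_def algebra_simps)
    also have "\<dots> \<le> df (r x) * dphi (tau x) * rd x - df x * (tau x * dphi (tau x))"
      using a5 dfx mu0 by (simp add: mult_left_mono)
    also have "\<dots> = dphi (tau x) * X x" by (simp add: X_def algebra_simps)
    also have "\<dots> \<le> 0" using dpt Xp by (simp add: mult_nonpos_nonneg)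
    finally have "Y x * rd x \<le> 0" .
    then show ?thesis using dp by (simp add: mult_le_0_iff)
  qed
  then show ?thesis using Xp by simp
qed

lemma signL: assumes x: "0 < x" "x < 1" and small: "rd x / tau x < \<eta>0"
  shows "X x < 0 \<and> 0 \<le> Y x"
proof -
  have tp: "0 < tau x" using x by (intro tau_pos) auto
  have dp: "0 < rd x" using x by (intro rdpos) auto
  have rp: "0 < r x" using x by (intro rpos) auto
  have dlt: "rd x < \<eta>0 * tau x" using small tp by (simp add: divide_less_eq)
  have "\<eta>0 * tau x \<le> (\<mu>0/\<mu>1) * tau x" using eta0 tp by (intro mult_right_mono) auto
  then have d2: "rd x < (\<mu>0/\<mu>1) * tau x" using dlt by linarith
  have "\<mu>1 * rd x < \<mu>1 * ((\<mu>0/\<mu>1) * tau x)" using d2 mu1 by (intro mult_strict_left_mono) auto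
  then have d3: "\<mu>1 * rd x < \<mu>0 * tau x" using mu1 by simp
  have "\<mu>0/\<mu>1 \<le> 1" using mu0 mu01 by simp
  then have "(\<mu>0/\<mu>1) * tau x \<le> 1 * tau x" using tp by (intro mult_right_mono) auto
  then have "(\<mu>0/\<mu>1) * tau x \<le> tau x" by (simp only: mult_1)
  then have dtau: "rd x < tau x" using d2 by linarith
  have dfr: "\<mu>0 \<le> df (r x) \<and> df (r x) \<le> \<mu>1" using dfb[of "r x"] rp by simp
  have dfx: "\<mu>0 \<le> df x \<and> df x \<le> \<mu>1" using dfb[of x] x by simp
  have "df (r x) * rd x \<le> \<mu>1 * rd x" using dfr dp by (intro mult_right_mono) auto
  moreover have "\<mu>0 * tau x \<le> df x * tau x" using dfx tp by (intro mult_right_mono) auto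
  ultimately have Xn: "X x < 0" using d3 by (simp add: X_def)
  have "0 \<le> Y x"
  proof (cases "t0 < rd x")
    case True
    have sp: "0 < rd x / tau x" using dp tp by simp
    have tl: "t0 / (rd x / tau x) < tau x"
    proof -
      have "t0 / (rd x / tau x) = t0 * tau x / rd x" by simp
      also have "\<dots> < rd x * tau x / rd x" using True tp dp by (intro divide_strict_right_mono) auto
      also have "\<dots> = tau x" using dp by simp
      finally show ?thesis .
    qed
    have eq: "rd x / tau x * tau x = rd x" using tp by simp
    have q: "dphi (tau x) > (\<mu>1/\<mu>0) * dphi (rd x)" using Q0[OF sp small tl, unfolded eq] .
    have dpd: "0 < dphi (rd x)" using True dphi_pos by auto
    have dpt: "0 < dphi (tau x)" using True dtau dphi_pos by auto
    have "df x * dphi (rd x) \<le> \<mu>1 * dphi (rd x)" using dfx dpd by (intro mult_right_mono) auto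
    also have "\<dots> = \<mu>0 * ((\<mu>1/\<mu>0) * dphi (rd x))" using mu0 by simp
    also have "\<dots> < \<mu>0 * dphi (tau x)" using q mu0 by (intro mult_strict_left_mono) auto
    also have "\<dots> \<le> df (r x) * dphi (tau x)" using dfr dpt by (intro mult_right_mono) auto
    finally show ?thesis by (simp add: Y_def)
  next
    case False
    then have dpd: "dphi (rd x) \<le> 0" using dphi_le0 dp by auto
    show ?thesis
    proof (cases "0 \<le> dphi (tau x)")
      case True
      have "0 \<le> df (r x) * dphi (tau x)" using True dfr mu0 by simp
      moreover have "df x * dphi (rd x) \<le> 0" using dpd dfx mu0 by (simp add: mult_nonneg_nonpos)
      ultimately show ?thesis by (simp add: Y_def)
    next
      case False
      have a5: "rd x * dphi (rd x) \<le> tau x * dphi (tau x)" using A5[of "rd x" "tau x"] dp dtau by simp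
      have "0 \<le> dphi (tau x) * X x" using False Xn by (simp add: mult_nonpos_nonpos)
      also have "dphi (tau x) * X x = df (r x) * dphi (tau x) * rd x - df x * (tau x * dphi (tau x))"
        by (simp add: X_def algebra_simps)
      also have "\<dots> \<le> df (r x) * dphi (tau x) * rd x - df x * (rd x * dphi (rd x))"
        using a5 dfx mu0 by (simp add: mult_left_mono)
      also have "\<dots> = Y x * rd x" by (simp add: Y_def algebra_simps)
      finally have "0 \<le> Y x * rd x" .
      then show ?thesis using dp by (simp add: zero_le_mult_iff)
    qed
  qed
  then show ?thesis using Xn by simp
qed

lemma Scont: "continuous_on {0<..1} (\<lambda>x. rd x / tau x)"
  using tau_pos by (intro continuous_on_divide rdcont tau_cont) force+

lemma r_tendsto: "((\<lambda>e. r e - e * c) \<longlongrightarrow> 0) (at_right 0)"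
proof -
  have "((\<lambda>e. r e - e * c) \<longlongrightarrow> 0 - 0 * c) (at_right 0)"
    by (intro tendsto_intros rlim tendsto_ident_at)
  then show ?thesis by simp
qed

lemma boundU: assumes r1: "0 < \<rho>1" "\<rho>1 < 1" shows "rd \<rho>1 / tau \<rho>1 \<le> \<eta>1"
proof (rule ccontr)
  assume "\<not> ?thesis" then have big: "\<eta>1 < rd \<rho>1 / tau \<rho>1" by simp
  have all: "\<eta>1 < rd x / tau x" if x: "0 < x" "x \<le> \<rho>1" for x
  proof (rule ccontr)
    assume "\<not> ?thesis" then have le2: "rd x / tau x \<le> \<eta>1" by simp
    define T where "T = {x..\<rho>1} \<inter> (\<lambda>y. rd y / tau y) -` {..\<eta>1}"
    have cT: "closed T" unfolding T_def
      by (intro continuous_closed_preimage continuous_on_subset[OF Scont]) (use x r1 in auto)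
    have xT: "x \<in> T" using le2 x by (simp add: T_def)
    have bT: "bdd_above T" unfolding T_def bdd_above_def by auto
    define z where "z = Sup T"
    have zT: "z \<in> T" unfolding z_def using closed_contains_Sup[OF _ bT cT] xT by auto
    then have z: "x \<le> z" "z \<le> \<rho>1" "rd z / tau z \<le> \<eta>1" by (auto simp: T_def)
    have zlt: "z < \<rho>1" using z big by (cases "z = \<rho>1") auto
    have above: "\<eta>1 < rd y / tau y" if y: "z < y" "y \<le> \<rho>1" for y
    proof (rule ccontr)
      assume "\<not> ?thesis"
      then have "y \<in> T" using y z by (auto simp: T_def)
      then have "y \<le> z" unfolding z_def using bT by (intro cSup_upper)
      then show False using y by simp
    qed
    have c: "1 * rd \<rho>1 \<le> 1 * rd z \<and> 1 * tau z < 1 * tau \<rho>1"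
    proof (rule core)
      fix y assume y: "z < y" "y < \<rho>1"
      show "0 < 1 * X y \<and> 1 * Y y \<le> 0" using signU[of y] above[of y] y z x r1 by auto
    qed (use z zlt x r1 in auto)
    have pz: "0 < tau z" "0 < rd z" "0 < tau \<rho>1" using z x r1 by (auto intro!: tau_pos rdpos)
    have "rd \<rho>1 / tau \<rho>1 \<le> rd z / tau \<rho>1" using c pz by (intro divide_right_mono) auto
    also have "\<dots> < rd z / tau z" using c pz by (intro divide_strict_left_mono) auto
    finally show False using big z by linarith
  qed
  have rdmono: "rd \<rho>1 \<le> rd a" if a: "0 < a" "a < \<rho>1" for a
  proof -
    have "1 * rd \<rho>1 \<le> 1 * rd a \<and> 1 * tau a < 1 * tau \<rho>1"
    proof (rule core)
      fix y assume y: "a < y" "y < \<rho>1"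
      show "0 < 1 * X y \<and> 1 * Y y \<le> 0" using signU[of y] all[of y] y a r1 by auto
    qed (use a r1 in auto)
    then show ?thesis by simp
  qed
  have rge: "\<rho>1 * rd \<rho>1 \<le> r \<rho>1"
  proof -
    have "r e - e * rd \<rho>1 \<le> r \<rho>1 - \<rho>1 * rd \<rho>1" if e: "0 < e" "e < \<rho>1" for e
    proof (rule DERIV_nonneg_imp_increasing_open[of e \<rho>1 "\<lambda>x. r x - x * rd \<rho>1"])
      fix y assume y: "e < y" "y < \<rho>1"
      have "((\<lambda>x. r x - x * rd \<rho>1) has_real_derivative rd y - 1 * rd \<rho>1) (at y)"
        using y e r1 by (intro DERIV_diff rder DERIV_cmult_right DERIV_ident) auto
      then show "\<exists>d. ((\<lambda>x. r x - x * rd \<rho>1) has_real_derivative d) (at y) \<and> 0 \<le> d"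
        using rdmono[of y] y e by auto
    next
      show "continuous_on {e..\<rho>1} (\<lambda>x. r x - x * rd \<rho>1)" using e r1
        by (intro continuous_intros continuous_on_subset[OF rcont]) auto
    qed (use e in simp)
    moreover have "\<forall>\<^sub>F e in at_right 0. e \<in> {0<..<\<rho>1}" using r1 by (intro eventually_at_right_real)
    ultimately have "\<forall>\<^sub>F e in at_right 0. r e - e * rd \<rho>1 \<le> r \<rho>1 - \<rho>1 * rd \<rho>1"
      by (auto elim!: eventually_mono)
    then have "0 \<le> r \<rho>1 - \<rho>1 * rd \<rho>1"
      by (intro tendsto_upperbound[OF r_tendsto]) auto
    then show ?thesis by simp
  qed
  have rp: "0 < r \<rho>1" and tp: "0 < tau \<rho>1" and dp: "0 < rd \<rho>1"
    using r1 by (auto intro!: rpos tau_pos rdpos)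
  have "\<mu>0 * (\<rho>1 * rd \<rho>1) / (\<mu>1 * \<rho>1) \<le> \<mu>0 * r \<rho>1 / (\<mu>1 * \<rho>1)"
    using rge mu0 mu1 r1 by (intro divide_right_mono mult_left_mono) auto
  also have "\<dots> \<le> tau \<rho>1" using r1 by (intro tau_lower) auto
  finally have "\<mu>0 * rd \<rho>1 / \<mu>1 \<le> tau \<rho>1" using r1 by simp
  then have "\<mu>0 * rd \<rho>1 \<le> \<mu>1 * tau \<rho>1" using mu1 by (simp add: divide_le_eq mult.commute)
  then have "rd \<rho>1 / tau \<rho>1 \<le> \<mu>1 / \<mu>0" using mu0 tp by (simp add: divide_le_eq le_divide_eq mult.commute)
  then show False using big eta1 by linarith
qed

lemma boundL: assumes r1: "0 < \<rho>1" "\<rho>1 < 1" shows "\<eta>0 \<le> rd \<rho>1 / tau \<rho>1"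
proof (rule ccontr)
  assume "\<not> ?thesis" then have small: "rd \<rho>1 / tau \<rho>1 < \<eta>0" by simp
  have all: "rd x / tau x < \<eta>0" if x: "0 < x" "x \<le> \<rho>1" for x
  proof (rule ccontr)
    assume "\<not> ?thesis" then have le2: "\<eta>0 \<le> rd x / tau x" by simp
    define T where "T = {x..\<rho>1} \<inter> (\<lambda>y. rd y / tau y) -` {\<eta>0..}"
    have cT: "closed T" unfolding T_def
      by (intro continuous_closed_preimage continuous_on_subset[OF Scont]) (use x r1 in auto)
    have xT: "x \<in> T" using le2 x by (simp add: T_def)
    have bT: "bdd_above T" unfolding T_def bdd_above_def by auto
    define z where "z = Sup T"
    have zT: "z \<in> T" unfolding z_def using closed_contains_Sup[OF _ bT cT] xT by auto
    then have z: "x \<le> z" "z \<le> \<rho>1" "\<eta>0 \<le> rd z / tau z" by (auto simp: T_def)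
    have zlt: "z < \<rho>1" using z small by (cases "z = \<rho>1") auto
    have above: "rd y / tau y < \<eta>0" if y: "z < y" "y \<le> \<rho>1" for y
    proof (rule ccontr)
      assume "\<not> ?thesis"
      then have "y \<in> T" using y z by (auto simp: T_def)
      then have "y \<le> z" unfolding z_def using bT by (intro cSup_upper)
      then show False using y by simp
    qed
    have c: "-1 * rd \<rho>1 \<le> -1 * rd z \<and> -1 * tau z < -1 * tau \<rho>1"
    proof (rule core)
      fix y assume y: "z < y" "y < \<rho>1"
      show "0 < -1 * X y \<and> -1 * Y y \<le> 0" using signL[of y] above[of y] y z x r1 by auto
    qed (use z zlt x r1 in auto)
    have pz: "0 < tau z" "0 < rd z" "0 < tau \<rho>1" using z x r1 by (auto intro!: tau_pos rdpos)
    have "rd z / tau z < rd z / tau \<rho>1" using c pz by (intro divide_strict_left_mono) auto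
    also have "\<dots> \<le> rd \<rho>1 / tau \<rho>1" using c pz by (intro divide_right_mono) auto
    finally show False using small z by linarith
  qed
  have rdmono: "rd a \<le> rd \<rho>1" if a: "0 < a" "a < \<rho>1" for a
  proof -
    have "-1 * rd \<rho>1 \<le> -1 * rd a \<and> -1 * tau a < -1 * tau \<rho>1"
    proof (rule core)
      fix y assume y: "a < y" "y < \<rho>1"
      show "0 < -1 * X y \<and> -1 * Y y \<le> 0" using signL[of y] all[of y] y a r1 by auto
    qed (use a r1 in auto)
    then show ?thesis by simp
  qed
  have rle: "r \<rho>1 \<le> \<rho>1 * rd \<rho>1"
  proof -
    have "r \<rho>1 - \<rho>1 * rd \<rho>1 \<le> r e - e * rd \<rho>1" if e: "0 < e" "e < \<rho>1" for e
    proof (rule DERIV_nonpos_imp_decreasing_open[of e \<rho>1 "\<lambda>x. r x - x * rd \<rho>1"])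
      fix y assume y: "e < y" "y < \<rho>1"
      have "((\<lambda>x. r x - x * rd \<rho>1) has_real_derivative rd y - 1 * rd \<rho>1) (at y)"
        using y e r1 by (intro DERIV_diff rder DERIV_cmult_right DERIV_ident) auto
      then show "\<exists>d. ((\<lambda>x. r x - x * rd \<rho>1) has_real_derivative d) (at y) \<and> d \<le> 0"
        using rdmono[of y] y e by auto
    next
      show "continuous_on {e..\<rho>1} (\<lambda>x. r x - x * rd \<rho>1)" using e r1
        by (intro continuous_intros continuous_on_subset[OF rcont]) auto
    qed (use e in simp)
    moreover have "\<forall>\<^sub>F e in at_right 0. e \<in> {0<..<\<rho>1}" using r1 by (intro eventually_at_right_real)
    ultimately have "\<forall>\<^sub>F e in at_right 0. r \<rho>1 - \<rho>1 * rd \<rho>1 \<le> r e - e * rd \<rho>1"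
      by (auto elim!: eventually_mono)
    then have "r \<rho>1 - \<rho>1 * rd \<rho>1 \<le> 0"
      by (intro tendsto_lowerbound[OF r_tendsto]) auto
    then show ?thesis by simp
  qed
  have rp: "0 < r \<rho>1" and tp: "0 < tau \<rho>1" and dp: "0 < rd \<rho>1"
    using r1 by (auto intro!: rpos tau_pos rdpos)
  have "tau \<rho>1 \<le> \<mu>1 * r \<rho>1 / (\<mu>0 * \<rho>1)" using r1 by (intro tau_upper) auto
  also have "\<dots> \<le> \<mu>1 * (\<rho>1 * rd \<rho>1) / (\<mu>0 * \<rho>1)"
    using rle mu0 mu1 r1 by (intro divide_right_mono mult_left_mono) auto
  finally have "tau \<rho>1 \<le> \<mu>1 * rd \<rho>1 / \<mu>0" using r1 by simp
  then have "\<mu>0 * tau \<rho>1 \<le> \<mu>1 * rd \<rho>1" using mu0 by (simp add: le_divide_eq mult.commute)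
  then have "\<mu>0 / \<mu>1 \<le> rd \<rho>1 / tau \<rho>1" using mu1 tp by (simp add: divide_le_eq le_divide_eq mult.commute)
  then show False using small eta0 by linarith
qed

lemma final: assumes x: "0 < x" "x \<le> 1"
  shows "lam * x powr (\<eta>1 * \<mu>1 / \<mu>0) \<le> r x \<and> r x \<le> lam * x powr (\<eta>0 * \<mu>0 / \<mu>1)"
proof (cases "x = 1")
  case True then show ?thesis using r1 by simp
next
  case False
  with x have x1: "x < 1" by simp
  define c0 where "c0 = \<eta>0 * \<mu>0 / \<mu>1"
  define c1 where "c1 = \<eta>1 * \<mu>1 / \<mu>0"
  have lp: "0 < lam" using rpos[of 1] r1 by simp
  have rdlow: "c0 / y \<le> rd y / r y" and rdup: "rd y / r y \<le> c1 / y" if y: "0 < y" "y < 1" for y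
  proof -
    have rp: "0 < r y" and tp: "0 < tau y" and dp: "0 < rd y"
      using y by (auto intro!: rpos tau_pos rdpos)
    have "\<eta>0 * tau y \<le> rd y" using boundL[OF y] tp by (simp add: le_divide_eq)
    moreover have "\<eta>0 * (\<mu>0 * r y / (\<mu>1 * y)) \<le> \<eta>0 * tau y"
      using tau_lower[of y] y eta0pos by (intro mult_left_mono) auto
    moreover have "\<eta>0 * (\<mu>0 * r y / (\<mu>1 * y)) = c0 * r y / y"
      unfolding c0_def using y mu1 by (simp add: field_simps)
    ultimately have "c0 * r y / y \<le> rd y" by linarith
    then show "c0 / y \<le> rd y / r y" using rp y by (simp add: field_simps)
    have "rd y \<le> \<eta>1 * tau y" using boundU[OF y] tp by (simp add: divide_le_eq)
    moreover have "\<eta>1 * tau y \<le> \<eta>1 * (\<mu>1 * r y / (\<mu>0 * y))"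
      using tau_upper[of y] y eta1 mu0 mu1 by (intro mult_left_mono) (auto intro: order.trans[rotated] simp: )
    moreover have "\<eta>1 * (\<mu>1 * r y / (\<mu>0 * y)) = c1 * r y / y"
      unfolding c1_def using y mu0 by (simp add: field_simps)
    ultimately have "rd y \<le> c1 * r y / y" by linarith
    then show "rd y / r y \<le> c1 / y" using rp y by (simp add: field_simps)
  qed
  have lncont: "continuous_on {x..1} (\<lambda>y. ln (r y))"
  proof (intro continuous_intros continuous_on_subset[OF rcont])
    show "\<forall>y\<in>{x..1}. r y \<noteq> 0" using x rpos by (metis atLeastAtMost_iff less_le_trans order.strict_iff_not)
  qed (use x in auto)
  have deriv: "((\<lambda>y. ln (r y) - c * ln y) has_real_derivative rd y / r y - c * (1 / y)) (at y)"
    if y: "x < y" "y < 1" for y c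
  proof -
    have p: "0 < r y" "0 < y" using y x by (auto intro!: rpos)
    have "((\<lambda>x. ln (r x)) has_real_derivative 1 / r y * rd y) (at y)"
      using p y by (intro DERIV_chain2[OF DERIV_ln_divide rder]) auto
    then have "((\<lambda>x. ln (r x)) has_real_derivative rd y / r y) (at y)" by simp
    then show ?thesis using p
      by (intro DERIV_diff DERIV_cmult DERIV_ln_divide) auto
  qed
  have cont2: "continuous_on {x..1} (\<lambda>y. ln (r y) - c * ln y)" for c
    using x by (intro continuous_on_diff[OF lncont] continuous_intros) auto
  have "ln (r x) - c0 * ln x \<le> ln (r 1) - c0 * ln 1"
  proof (rule DERIV_nonneg_imp_increasing_open[OF _ _ cont2])
    fix y assume y: "x < y" "y < 1"
    show "\<exists>d. ((\<lambda>y. ln (r y) - c0 * ln y) has_real_derivative d) (at y) \<and> 0 \<le> d"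
      using deriv[OF y, of c0] rdlow[of y] y x by (intro exI[of _ "rd y / r y - c0 * (1 / y)"]) auto
  qed (use x in auto)
  then have u: "ln (r x) \<le> ln lam + c0 * ln x" using r1 by simp
  have "ln (r 1) - c1 * ln 1 \<le> ln (r x) - c1 * ln x"
  proof (rule DERIV_nonpos_imp_decreasing_open[OF _ _ cont2])
    fix y assume y: "x < y" "y < 1"
    show "\<exists>d. ((\<lambda>y. ln (r y) - c1 * ln y) has_real_derivative d) (at y) \<and> d \<le> 0"
      using deriv[OF y, of c1] rdup[of y] y x by (intro exI[of _ "rd y / r y - c1 * (1 / y)"]) auto
  qed (use x in auto)
  then have l: "ln lam + c1 * ln x \<le> ln (r x)" using r1 by simp
  have rp: "0 < r x" using x by (intro rpos) auto
  have "r x = exp (ln (r x))" using rp by simp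
  also have "\<dots> \<le> exp (ln lam + c0 * ln x)" using u by simp
  also have "\<dots> = lam * x powr c0" using lp x by (simp add: exp_add powr_def mult.commute)
  finally have up: "r x \<le> lam * x powr c0" .
  have "lam * x powr c1 = exp (ln lam + c1 * ln x)" using lp x by (simp add: exp_add powr_def mult.commute)
  also have "\<dots> \<le> exp (ln (r x))" using l by simp
  also have "\<dots> = r x" using rp by simp
  finally show ?thesis using up unfolding c0_def c1_def by simp
qed

end


lemma tangent_ineq:
  fixes F dF :: "real \<Rightarrow> real"
  assumes cv: "convex_on {0<..} F" and der: "\<And>x. 0 < x \<Longrightarrow> (F has_real_derivative dF x) (at x)"
    and p: "0 < p" and q: "0 < q"
  shows "dF p * (q - p) \<le> F q - F p"
proof -
  have "p \<in> interior ({0<..} :: real set)" using p by (simp add: interior_open)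
  then show ?thesis
    using convex_on_imp_above_tangent[OF cv connected_Ioi _ _ has_field_derivative_at_within[OF der[OF p]], of q] q
    by (simp add: mult.commute)
qed

lemma deriv_mono_convex:
  fixes F dF :: "real \<Rightarrow> real"
  assumes cv: "convex_on {0<..} F" and der: "\<And>x. 0 < x \<Longrightarrow> (F has_real_derivative dF x) (at x)"
    and p: "0 < p" and pq: "p \<le> q"
  shows "dF p \<le> dF q"
proof (cases "p = q")
  case False
  then have pq': "p < q" using pq by simp
  have "dF p * (q - p) \<le> F q - F p" using tangent_ineq[OF cv der p] p pq by simp
  moreover have "dF q * (p - q) \<le> F p - F q" using tangent_ineq[OF cv der, of q p] p pq by simp
  ultimately have "dF p * (q - p) \<le> dF q * (q - p)" by (simp add: algebra_simps)
  then show ?thesis using pq' by simp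
qed simp

lemma deriv_nonneg_of_mono:
  fixes F dF :: "real \<Rightarrow> real"
  assumes der: "(F has_real_derivative d) (at x)"
    and mono: "\<And>h. 0 < h \<Longrightarrow> F x \<le> F (x + h)"
  shows "0 \<le> d"
proof (rule ccontr)
  assume "\<not> 0 \<le> d"
  then obtain e where e: "0 < e" "\<forall>h>0. h < e \<longrightarrow> F x > F (x + h)"
    using DERIV_neg_dec_right[OF der] by force
  have "F (x + e/2) < F x" using e by auto
  moreover have "F x \<le> F (x + e/2)" using e by (intro mono) auto
  ultimately show False by linarith
qed

lemma strict_to_convex:
  assumes "strict_convex_on S h" shows "convex_on S h"
  unfolding convex_on_def
proof (intro conjI ballI allI impI)
  show "convex S" using assms by (simp add: strict_convex_on_def)
next
  fix x y :: real and u v :: real assume xy: "x \<in> S" "y \<in> S" and uv: "0 \<le> u" "0 \<le> v" "u + v = 1"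
  show "h (u *\<^sub>R x + v *\<^sub>R y) \<le> u * h x + v * h y"
  proof (cases "x = y \<or> u = 0 \<or> v = 0")
    case True
    then show ?thesis
    proof (elim disjE)
      assume "x = y"
      then have "u *\<^sub>R x + v *\<^sub>R y = x" "u * h x + v * h y = h x"
        using uv by (simp_all add: algebra_simps flip: distrib_right)
      then show ?thesis by simp
    next
      assume "u = 0" then show ?thesis using uv by simp
    next
      assume "v = 0" then show ?thesis using uv by simp
    qed
  next
    case False
    then have "x \<noteq> y" "0 < v" "v < 1" using uv by auto
    then have "h ((1 - v) * x + v * y) < (1 - v) * h x + v * h y"
      using assms xy unfolding strict_convex_on_def by blast
    moreover have "u = 1 - v" using uv by simp
    ultimately show ?thesis by simp
  qed
qed

theorem corollary4p4:
  fixes n :: nat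
    and \<kappa> f df :: "real \<Rightarrow> real"
    and \<phi> dphi ddphi h dh ddh :: "real \<Rightarrow> real"
    and t0 \<mu>0 \<mu>1 lam :: real
    and r :: "real \<Rightarrow> real"
  assumes n2: "n \<ge> 2"
    and kappa_cont: "continuous_on {0..} \<kappa>"
    and mu_plus: "(\<integral>\<^sup>+ s. ennreal (indicator {0..} s * (s * max (\<kappa> s) 0)) \<partial>lborel) \<le> 1"
    and mu_minus: "(\<integral>\<^sup>+ s. ennreal (indicator {0..} s * (s * max (- \<kappa> s) 0)) \<partial>lborel) < \<infinity>"
    and f_deriv: "\<forall>x\<in>{0..}. (f has_real_derivative df x) (at x within {0..})"
    and df_deriv: "\<forall>x\<in>{0..}. (df has_real_derivative (- \<kappa> x * f x)) (at x within {0..})"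
    and f0: "f 0 = 0" and df0: "df 0 = 1"
    \<comment> \<open>(A1)\<close>
    and h_C2: "\<forall>x\<in>{0<..}. (h has_real_derivative dh x) (at x) \<and> (dh has_real_derivative ddh x) (at x)"
    and ddh_cont: "continuous_on {0<..} ddh"
    and h_strict_convex: "strict_convex_on {0<..} h"
    \<comment> \<open>(A4)\<close>
    and phi_pos: "\<forall>v\<in>{0<..}. \<phi> v > 0"
    and phi_C2: "\<forall>v\<in>{0<..}. (\<phi> has_real_derivative dphi v) (at v) \<and> (dphi has_real_derivative ddphi v) (at v)"
    and ddphi_cont: "continuous_on {0<..} ddphi"
    and phi_convex: "convex_on {0<..} \<phi>"
    \<comment> \<open>(A5)\<close>
    and A5: "mono_on {0<..} (\<lambda>v. v * dphi v)"
    \<comment> \<open>(A6)\<close>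
    and t0: "t0 \<ge> 0"
    and dphi_t0: "(t0 > 0 \<and> dphi t0 = 0) \<or> (t0 = 0 \<and> (dphi \<longlongrightarrow> 0) (at_right 0))"
    and q1_C1: "\<exists>dq1. (\<forall>s\<in>{1..}. (q1_fun dphi t0 has_real_derivative dq1 s) (at s within {1..}) \<and> dq1 s < 0)
                       \<and> continuous_on {1..} dq1"
    and q0_C1: "\<exists>dq0. (\<forall>s\<in>{0<..1}. (q0_fun dphi t0 has_real_derivative dq0 s) (at s within {0<..1}) \<and> dq0 s < 0)
                       \<and> continuous_on {0<..1} dq0"
    and q1_lim: "(q1_fun dphi t0 \<longlongrightarrow> 0) at_top"
    and q0_lim: "filterlim (q0_fun dphi t0) at_top (at_right 0)"
    \<comment> \<open>bounds on f\<close>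
    and mu0_pos: "0 < \<mu>0" and mu01: "\<mu>0 \<le> \<mu>1"
    and df_bounds: "\<forall>x\<in>{0..}. \<mu>0 \<le> df x \<and> df x \<le> \<mu>1"
    and f_bounds: "\<forall>x\<in>{0..}. \<mu>0 * x \<le> f x \<and> f x \<le> \<mu>1 * x"
    \<comment> \<open>the solution\<close>
    and lam_pos: "lam > 0"
    and reg: "regular_equilibrium_solution n f df dphi ddphi ddh lam r"
  shows "let \<eta>0 = min (\<mu>0 / \<mu>1) (the_inv_into {0<..1} (q0_fun dphi t0) (\<mu>1 / \<mu>0));
             \<eta>1 = max (\<mu>1 / \<mu>0) (the_inv_into {1..} (q1_fun dphi t0) (\<mu>0 / \<mu>1));
             c0 = \<eta>0 * \<mu>0 / \<mu>1;
             c1 = \<eta>1 * \<mu>1 / \<mu>0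
         in \<forall>\<rho>\<in>{0<..1}. lam * \<rho> powr c1 \<le> r \<rho> \<and> r \<rho> \<le> lam * \<rho> powr c0"
proof -
  define q0 where "q0 = q0_fun dphi t0"
  define q1 where "q1 = q1_fun dphi t0"
  from reg obtain rd rdd r0 where
    rdw: "\<forall>\<rho>\<in>{0<..1}. (r has_real_derivative rd \<rho>) (at \<rho> within {0<..1})" and
    rdc: "continuous_on {0<..1} rd" and
    rddd: "\<forall>\<rho>\<in>{0<..<1}. (rd has_real_derivative rdd \<rho>) (at \<rho>)" and
    rdp: "\<forall>\<rho>\<in>{0<..1}. rd \<rho> > 0" and
    r1: "r 1 = lam" and
    odeL: "\<forall>\<rho>\<in>{0<..<1}.
           let \<tau> = tau_fun f r \<rho> in
           f \<rho> * (ddphi (rd \<rho>) + ddh (rd \<rho> * \<tau> ^ (n - 1)) * \<tau> ^ (2 * (n - 1))) * rdd \<rho>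
           = real (n - 1) * (df (r \<rho>) * dphi \<tau> - df \<rho> * dphi (rd \<rho>))
             - real (n - 1) * (df (r \<rho>) * rd \<rho> - df \<rho> * \<tau>)
               * ddh (rd \<rho> * \<tau> ^ (n - 1)) * rd \<rho> * \<tau> ^ (2 * n - 3)" and
    rlim: "(r \<longlongrightarrow> 0) (at_right 0)"
    unfolding regular_equilibrium_solution_def equilibrium_solution_def by blast
  have rder: "(r has_real_derivative rd x) (at x)" if x: "0 < x" "x < 1" for x
  proof -
    have i: "x \<in> interior {0<..1::real}" using x by simp
    have "(r has_real_derivative rd x) (at x within {0<..1})" using rdw x by simp
    then show ?thesis by (simp only: at_within_interior[OF i])
  qed
  have rcont: "continuous_on {0<..1} r"
    by (rule DERIV_continuous_on[of _ _ rd]) (use rdw in blast)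
  have fder: "(f has_real_derivative df x) (at x)" if x: "0 < x" for x
  proof -
    have i: "x \<in> interior {0::real..}" using x by simp
    have "(f has_real_derivative df x) (at x within {0..})" using f_deriv x by simp
    then show ?thesis by (simp only: at_within_interior[OF i])
  qed
  have dphider: "\<And>v. 0 < v \<Longrightarrow> (dphi has_real_derivative ddphi v) (at v)"
    and phider: "\<And>v. 0 < v \<Longrightarrow> (\<phi> has_real_derivative dphi v) (at v)" using phi_C2 by auto
  have dhder: "\<And>v. 0 < v \<Longrightarrow> (dh has_real_derivative ddh v) (at v)"
    and hder: "\<And>v. 0 < v \<Longrightarrow> (h has_real_derivative dh v) (at v)" using h_C2 by auto
  have dphi_mono: "\<And>p q. 0 < p \<Longrightarrow> p \<le> q \<Longrightarrow> dphi p \<le> dphi q"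
    by (rule deriv_mono_convex[OF phi_convex phider])
  have ddphi_nn: "ddphi v \<ge> 0" if v: "0 < v" for v
    by (rule deriv_nonneg_of_mono[OF dphider[OF v]]) (use dphi_mono v in auto)
  have hconv: "convex_on {0<..} h" by (rule strict_to_convex[OF h_strict_convex])
  have dh_mono: "\<And>p q. 0 < p \<Longrightarrow> p \<le> q \<Longrightarrow> dh p \<le> dh q"
    by (rule deriv_mono_convex[OF hconv hder])
  have ddh_nn: "ddh v \<ge> 0" if v: "0 < v" for v
    by (rule deriv_nonneg_of_mono[OF dhder[OF v]]) (use dh_mono v in auto)
  have dh_strict: "dh p < dh q" if pq: "0 < p" "p < q" for p q
  proof -
    define m where "m = (p + q) / 2"
    have m: "0 < m" "m = (1 - 1/2) * p + (1/2) * q" using pq by (auto simp: m_def)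
    have "\<forall>x\<in>{0<..}. \<forall>y\<in>{0<..}. x \<noteq> y \<longrightarrow> (\<forall>t. 0 < t \<and> t < 1 \<longrightarrow>
        h ((1 - t) * x + t * y) < (1 - t) * h x + t * h y)"
      using h_strict_convex by (simp add: strict_convex_on_def)
    then have "\<forall>t. 0 < t \<and> t < 1 \<longrightarrow> h ((1 - t) * p + t * q) < (1 - t) * h p + t * h q"
      using pq by auto
    then have "0 < (1/2::real) \<and> (1/2::real) < 1 \<longrightarrow> h ((1 - 1/2) * p + (1/2) * q) < (1 - 1/2) * h p + (1/2) * h q"
      by (rule spec)
    then have "h ((1 - 1/2) * p + (1/2) * q) < (1 - 1/2) * h p + (1/2) * h q"
      by simp
    then have "h m < (1 - 1/2) * h p + (1/2) * h q" using m(2) by simp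
    moreover have "dh p * (m - p) \<le> h m - h p" by (rule tangent_ineq[OF hconv hder pq(1) m(1)])
    moreover have "dh q * (m - q) \<le> h m - h q" using pq by (intro tangent_ineq[OF hconv hder _ m(1)]) auto
    moreover have "m - p = (q - p) / 2" "m - q = - ((q - p) / 2)" by (auto simp: m_def field_simps)
    ultimately have a1: "h m < (1 - 1/2) * h p + (1/2) * h q"
      and a2: "dh p * ((q - p)/2) \<le> h m - h p" and a3: "- (dh q * ((q - p)/2)) \<le> h m - h q"
      by auto
    have lin: "\<And>A B hm hp hq :: real. hm < (1 - 1/2) * hp + (1/2) * hq \<Longrightarrow> A \<le> hm - hp
       \<Longrightarrow> - B \<le> hm - hq \<Longrightarrow> A < B" by (simp add: field_simps)
    have "dh p * ((q - p)/2) < dh q * ((q - p) / 2)" by (rule lin[OF a1 a2 a3])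
    then show ?thesis using pq by simp
  qed
  have A5': "\<And>p q. 0 < p \<Longrightarrow> p \<le> q \<Longrightarrow> p * dphi p \<le> q * dphi q"
    using A5 by (auto intro: mono_onD)
  have P0: "0 \<le> dphi v" if v: "t0 < v" for v
    using dphi_t0
  proof
    assume "0 < t0 \<and> dphi t0 = 0"
    then show ?thesis using dphi_mono[of t0 v] v by auto
  next
    assume a: "t0 = 0 \<and> (dphi \<longlongrightarrow> 0) (at_right 0)"
    have "\<forall>\<^sub>F w in at_right 0. w \<in> {0<..<v}" using v a by (intro eventually_at_right_real) auto
    then have "\<forall>\<^sub>F w in at_right 0. dphi w \<le> dphi v"
      by (rule eventually_mono) (auto intro: dphi_mono)
    then show ?thesis using a by (intro tendsto_upperbound[of dphi 0]) auto
  qed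
  have dphi_le0: "dphi v \<le> 0" if v: "0 < v" "v \<le> t0" for v
  proof -
    have "0 < t0" using v by simp
    then have "dphi t0 = 0" using dphi_t0 by auto
    then show ?thesis using dphi_mono[of v t0] v by simp
  qed
  obtain dq0 where dq0: "\<forall>s\<in>{0<..1}. (q0 has_real_derivative dq0 s) (at s within {0<..1}) \<and> dq0 s < 0"
    using q0_C1 unfolding q0_def by blast
  obtain dq1 where dq1: "\<forall>s\<in>{1..}. (q1 has_real_derivative dq1 s) (at s within {1..}) \<and> dq1 s < 0"
    using q1_C1 unfolding q1_def by blast
  have q0cont: "continuous_on {0<..1} q0"
    by (rule DERIV_continuous_on[of _ _ dq0]) (use dq0 in blast)
  have q1cont: "continuous_on {1..} q1"
    by (rule DERIV_continuous_on[of _ _ dq1]) (use dq1 in blast)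
  have q0dec: "q0 b < q0 a" if ab: "0 < a" "a < b" "b \<le> 1" for a b
  proof (rule DERIV_neg_imp_decreasing_open[OF ab(2)])
    fix x assume x: "a < x" "x < b"
    then have i: "x \<in> interior {0<..1::real}" using ab by simp
    have "(q0 has_real_derivative dq0 x) (at x within {0<..1}) \<and> dq0 x < 0" using dq0 x ab by simp
    then have "(q0 has_real_derivative dq0 x) (at x) \<and> dq0 x < 0" by (simp only: at_within_interior[OF i])
    then show "\<exists>y. (q0 has_real_derivative y) (at x) \<and> y < 0" by blast
  next
    show "continuous_on {a..b} q0" using ab by (intro continuous_on_subset[OF q0cont]) auto
  qed
  have q1dec: "q1 b < q1 a" if ab: "1 \<le> a" "a < b" for a b
  proof (rule DERIV_neg_imp_decreasing_open[OF ab(2)])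
    fix x assume x: "a < x" "x < b"
    then have i: "x \<in> interior {1::real..}" using ab by simp
    have "(q1 has_real_derivative dq1 x) (at x within {1..}) \<and> dq1 x < 0" using dq1 x ab by simp
    then have "(q1 has_real_derivative dq1 x) (at x) \<and> dq1 x < 0" by (simp only: at_within_interior[OF i])
    then show "\<exists>y. (q1 has_real_derivative y) (at x) \<and> y < 0" by blast
  next
    show "continuous_on {a..b} q1" using ab by (intro continuous_on_subset[OF q1cont]) auto
  qed
  have B0: "bdd_below ((\<lambda>v. dphi v / dphi (s * v)) ` {t0 / s<..})" if s: "0 < s" "s \<le> 1" for s
  proof (rule bdd_belowI[of _ 0])
    fix y assume "y \<in> (\<lambda>v. dphi v / dphi (s * v)) ` {t0 / s<..}"
    then obtain v where v: "t0 / s < v" "y = dphi v / dphi (s * v)" by auto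
    have "t0 \<le> t0 / s" using s t0 by (simp add: le_divide_eq mult_left_le)
    then have "t0 < v" using v by simp
    moreover have "t0 < s * v" using v s by (simp add: divide_less_eq mult.commute)
    ultimately show "0 \<le> y" using v P0 by simp
  qed
  have B1: "bdd_above ((\<lambda>v. dphi v / dphi (s * v)) ` {t0<..})" if s: "1 \<le> s" for s
  proof (rule bdd_aboveI[of _ 1])
    fix y assume "y \<in> (\<lambda>v. dphi v / dphi (s * v)) ` {t0<..}"
    then obtain v where v: "t0 < v" "y = dphi v / dphi (s * v)" by auto
    have vp: "0 < v" using v t0 by simp
    have "v \<le> s * v" using s vp by simp
    then have "dphi v \<le> dphi (s * v)" using dphi_mono vp by simp
    moreover have "0 \<le> dphi v" using v P0[of v] by simp
    ultimately show "y \<le> 1" using v by (cases "dphi (s * v) = 0") (auto simp: divide_le_eq_1)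
  qed
  have q0_1: "0 \<le> q0 1"
    unfolding q0_def q0_fun_def by (rule cINF_greatest) (use P0 in auto)
  have dphi_pos: "0 < dphi v" if v: "t0 < v" for v
  proof (rule ccontr)
    assume "\<not> ?thesis"
    then have z: "dphi v = 0" using P0[OF v] by simp
    have vp: "0 < v" using v t0 by simp
    define s where "s = (1 + t0 / v) / 2"
    have tv: "t0 / v < 1" using v vp by simp
    have "0 \<le> t0 / v" using t0 vp by simp
    then have s: "0 < s" "s < 1" using tv by (auto simp: s_def)
    have sv: "s * v = (v + t0) / 2" using vp by (simp add: s_def field_simps)
    have svb: "0 < s * v" "t0 < s * v" "s * v \<le> v" unfolding sv using v vp t0 by auto
    have "dphi (s * v) \<le> dphi v" by (rule dphi_mono[OF svb(1) svb(3)])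
    moreover have "0 \<le> dphi (s * v)" by (rule P0[OF svb(2)])
    ultimately have "dphi (s * v) = 0" using z by simp
    then have r0: "dphi v / dphi (s * v) = 0" by simp
    have "t0 / s < v" using sv v s by (simp add: divide_less_eq mult.commute)
    then have "q0 s \<le> 0"
      unfolding q0_def q0_fun_def using cINF_lower[OF B0[of s], of v] s r0 by simp
    moreover have "q0 1 < q0 s" using s by (intro q0dec) auto
    ultimately show False using q0_1 by simp
  qed
  have q1_1: "q1 1 = 1"
  proof (rule antisym)
    show "q1 1 \<le> 1" unfolding q1_def q1_fun_def
      by (rule cSUP_least) (auto simp: divide_le_eq_1 dest: P0)
    have "t0 < t0 + 1" by simp
    then have "dphi (t0+1) / dphi (1 * (t0+1)) \<le> q1 1" unfolding q1_def q1_fun_def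
      by (intro cSUP_upper B1) auto
    then show "1 \<le> q1 1" using dphi_pos[of "t0+1"] by simp
  qed
  have q0_1': "q0 1 \<le> 1"
  proof -
    have "q0 1 \<le> dphi (t0+1) / dphi (1 * (t0+1))" unfolding q0_def q0_fun_def
      by (rule cINF_lower) (use B0[of 1] in auto)
    then show ?thesis using dphi_pos[of "t0+1"] by simp
  qed
  have dphi_strict: "dphi p < dphi q" if pq: "t0 \<le> p" "0 < p" "p < q" for p q
  proof (cases "p = t0")
    case True
    then have "dphi p = 0" using dphi_t0 pq by auto
    then show ?thesis using dphi_pos[of q] pq by simp
  next
    case False
    then have pt: "t0 < p" using pq by simp
    define s where "s = q / p"
    have s1: "1 < s" using pq by (simp add: s_def)
    have sp: "s * p = q" using pq by (simp add: s_def)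
    have "dphi p / dphi (s * p) \<le> q1 s" unfolding q1_def q1_fun_def
      by (intro cSUP_upper B1) (use pt s1 in auto)
    also have "\<dots> < q1 1" using s1 by (intro q1dec) auto
    finally have "dphi p / dphi q < 1" using q1_1 sp by simp
    then show ?thesis using dphi_pos[of q] pq pt by (simp add: divide_less_eq)
  qed
  have mu1: "0 < \<mu>1" using mu0_pos mu01 by simp
  obtain x1 where x1: "1 \<le> x1" "q1 x1 = \<mu>0 / \<mu>1"
  proof -
    have "\<forall>\<^sub>F s in at_top. q1 s < \<mu>0 / \<mu>1"
      using q1_lim mu0_pos mu1 unfolding q1_def by (intro order_tendstoD(2)) auto
    then obtain b where b: "\<And>s. b \<le> s \<Longrightarrow> q1 s < \<mu>0 / \<mu>1"
      unfolding eventually_at_top_linorder by auto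
    have "q1 (max b 1) \<le> \<mu>0 / \<mu>1" using b[of "max b 1"] by simp
    moreover have "\<mu>0 / \<mu>1 \<le> q1 1" using q1_1 mu0_pos mu01 by simp
    ultimately obtain x where "1 \<le> x" "x \<le> max b 1" "q1 x = \<mu>0 / \<mu>1"
      using IVT2'[of q1 "max b 1" "\<mu>0 / \<mu>1" 1] continuous_on_subset[OF q1cont] by force
    then show ?thesis using that by blast
  qed
  obtain x0 where x0: "0 < x0" "x0 \<le> 1" "q0 x0 = \<mu>1 / \<mu>0"
  proof -
    have "\<forall>\<^sub>F s in at_right 0. \<mu>1 / \<mu>0 \<le> q0 s"
      using q0_lim unfolding q0_def filterlim_at_top by auto
    then obtain b where b: "b > 0" "\<And>y. 0 < y \<Longrightarrow> y < b \<Longrightarrow> \<mu>1 / \<mu>0 \<le> q0 y"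
      unfolding eventually_at_right_field by auto
    define a where "a = min (b/2) (1/2)"
    have a: "0 < a" "a < b" "a \<le> 1" using b by (auto simp: a_def)
    have "\<mu>1 / \<mu>0 \<le> q0 a" using b a by auto
    moreover have "q0 1 \<le> \<mu>1 / \<mu>0"
    proof -
      have "1 \<le> \<mu>1 / \<mu>0" using mu0_pos mu01 by simp
      then show ?thesis using q0_1' by linarith
    qed
    ultimately obtain x where xx: "a \<le> x" "x \<le> 1" "q0 x = \<mu>1 / \<mu>0"
      using IVT2'[of q0 1 "\<mu>1 / \<mu>0" a] continuous_on_subset[OF q0cont, of "{a..1}"] a by force
    show ?thesis using a xx by (intro that[of x]) auto
  qed
  have inj1: "inj_on q1 {1..}"
  proof (rule inj_onI)
    fix a b assume ab: "a \<in> {1..}" "b \<in> {1..}" "q1 a = q1 b"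
    show "a = b"
    proof (rule ccontr)
      assume "a \<noteq> b"
      then consider "a < b" | "b < a" by linarith
      then show False using ab q1dec[of a b] q1dec[of b a] by cases auto
    qed
  qed
  have inj0: "inj_on q0 {0<..1}"
  proof (rule inj_onI)
    fix a b assume ab: "a \<in> {0<..1}" "b \<in> {0<..1}" "q0 a = q0 b"
    show "a = b"
    proof (rule ccontr)
      assume "a \<noteq> b"
      then consider "a < b" | "b < a" by linarith
      then show False using ab q0dec[of a b] q0dec[of b a] by cases auto
    qed
  qed
  have ti1: "the_inv_into {1..} q1 (\<mu>0 / \<mu>1) = x1"
    using the_inv_into_f_f[OF inj1, of x1] x1 by simp
  have ti0: "the_inv_into {0<..1} q0 (\<mu>1 / \<mu>0) = x0"
    using the_inv_into_f_f[OF inj0, of x0] x0 by simp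
  define \<eta>0 where "\<eta>0 = min (\<mu>0 / \<mu>1) x0"
  define \<eta>1 where "\<eta>1 = max (\<mu>1 / \<mu>0) x1"
  have Q1: "dphi v < (\<mu>0 / \<mu>1) * dphi (s * v)" if sv: "\<eta>1 < s" "t0 < v" for s v
  proof -
    have s1: "x1 < s" "1 \<le> s" using sv x1 by (auto simp: \<eta>1_def)
    have vp: "0 < v" using sv t0 by simp
    have "v \<le> s * v" using s1 vp by simp
    then have "t0 < s * v" using sv by linarith
    then have dp: "0 < dphi (s * v)" by (rule dphi_pos)
    have "dphi v / dphi (s * v) \<le> q1 s" unfolding q1_def q1_fun_def
      by (intro cSUP_upper B1) (use sv s1 in auto)
    also have "\<dots> < q1 x1" using s1 x1 by (intro q1dec) auto
    finally have "dphi v / dphi (s * v) < \<mu>0 / \<mu>1" using x1 by simp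
    then show ?thesis using dp by (simp add: divide_less_eq)
  qed
  have Q0: "dphi v > (\<mu>1 / \<mu>0) * dphi (s * v)" if sv: "0 < s" "s < \<eta>0" "t0 / s < v" for s v
  proof -
    have s1: "s < x0" "s \<le> 1" using sv x0 by (auto simp: \<eta>0_def)
    have "t0 < s * v" using sv by (simp add: divide_less_eq mult.commute)
    then have dp: "0 < dphi (s * v)" by (rule dphi_pos)
    have "q0 x0 < q0 s" using s1 x0 sv by (intro q0dec) auto
    also have "q0 s \<le> dphi v / dphi (s * v)" unfolding q0_def q0_fun_def
      by (rule cINF_lower) (use B0[of s] sv s1 in auto)
    finally have "\<mu>1 / \<mu>0 < dphi v / dphi (s * v)" using x0 by simp
    then show ?thesis using dp by (simp add: less_divide_eq)
  qed
  interpret E: eqs n f df dphi ddphi dh ddh r rd rdd t0 \<mu>0 \<mu>1 lam \<eta>0 \<eta>1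
  proof
    show "n \<ge> 2" by (rule n2)
    show "0 < \<mu>0" "\<mu>0 \<le> \<mu>1" by (rule mu0_pos, rule mu01)
    show "\<And>x. 0 \<le> x \<Longrightarrow> \<mu>0 \<le> df x \<and> df x \<le> \<mu>1" using df_bounds by auto
    show "\<And>x. 0 \<le> x \<Longrightarrow> \<mu>0 * x \<le> f x \<and> f x \<le> \<mu>1 * x" using f_bounds by auto
  qed (use fder rder rcont rdc rddd rdp rlim r1 odeL dphider ddphi_nn dphi_mono A5' t0 dphi_pos
        dphi_le0 dphi_strict dhder ddh_nn dh_strict Q1 Q0 x0 mu0_pos mu1 in
       \<open>auto simp: Let_def \<eta>0_def \<eta>1_def\<close>)
  show ?thesis
    unfolding Let_def q0_def[symmetric] q1_def[symmetric] ti0 ti1 \<eta>0_def[symmetric] \<eta>1_def[symmetric]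
    using E.final by auto
qed

end
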